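(* Let $n\in\mathbb{N}$ and $n-1<\beta<n$, and let $X=\mathsf{X}_\beta$ with alphabet $\mathcal{A}_\beta$. Define $\varphi\colon\mathcal{A}_\beta\to\{0,1\}^*$ by $\varphi(j)=1^j0$, extend it to words by concatenation, and let $X'$ be the shift space whose language consists of all subwords of words $\varphi(w)$, $w\in\mathcal{B}(X)$. Define $\varphi\colon X^+\to X'^+$ by $\varphi(x_1x_2\cdots)=\varphi(x_1)\varphi(x_2)\cdots$. Then $\varphi\colon X^+\to X'^+$ is surjective and order preserving with respect to the lexicographic order.
   Context: For $\beta>1$, let $e(\beta)=x_1x_2\cdots$ be the $\beta$-expansion of $1$ ($x_1=\lfloor\beta\rfloor$, $r_1=\{\beta\}$, $x_n=\lfloor\beta r_{n-1}\rfloor$, $r_n=\{\beta r_{n-1}\}$). The generating sequence is $g(\beta)=e(\beta)$ if $e(\beta)$ has infinitely many nonzero terms, and $g(\beta)=(a_1\cdots a_{k-1}(a_k-1))^\infty$ if $e(\beta)=a_1\cdots a_k00\cdots$ with $a_k\neq0$. The beta-shift $\mathsf{X}_\beta$ is the two-sided shift space whose language $\mathcal{B}(\mathsf{X}_\beta)$ is the set of words $x_n(t)\cdots x_m(t)$ occurring in $\beta$-expansions of $t\in[0,1]$; for non-integer $\beta$ its alphabet is $\mathcal{A}_\beta=\{0,\ldots,\lfloor\beta\rfloor\}$. A one-sided sequence $y_1y_2\cdots$ is a right-ray of $\mathsf{X}_\beta$ iff $y_ky_{k+1}\cdots\le g(\beta)$ lexicographically for all $k$. For a shift space $Y$, $Y^+=\{y_0y_1y_2\cdots\mid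 y\in Y\}$ is its set of right-rays, ordered lexicographically. *)

theory Defs
  imports Complex_Main
begin

fun beta_rem :: "real \<Rightarrow> real \<Rightarrow> nat \<Rightarrow> real" where
  "beta_rem \<beta> t 0 = t"
| "beta_rem \<beta> t (Suc k) = frac (\<beta> * beta_rem \<beta> t k)"

text \<open>Digit x_(k+1)(t) = floor(beta r_k(t)); index k here corresponds to x_(k+1).\<close>
definition beta_digit :: "real \<Rightarrow> real \<Rightarrow> nat \<Rightarrow> nat" where
  "beta_digit \<beta> t k = nat \<lfloor>\<beta> * beta_rem \<beta> t k\<rfloor>"

definition beta_lang :: "real \<Rightarrow> nat list set" where
  "beta_lang \<beta> = {map (beta_digit \<beta> t) [i..<j] | t i j. 0 \<le> t \<and> t \<le> 1 \<and> i < j}"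

definition shift_of_lang :: "nat list set \<Rightarrow> (int \<Rightarrow> nat) set" where
  "shift_of_lang L = {y. \<forall>i j. i \<le> j \<longrightarrow> map y [i..j] \<in> L}"

definition right_rays :: "(int \<Rightarrow> nat) set \<Rightarrow> (nat \<Rightarrow> nat) set" where
  "right_rays Y = {(\<lambda>k. y (int k)) | y. y \<in> Y}"

definition beta_shift :: "real \<Rightarrow> (int \<Rightarrow> nat) set" where
  "beta_shift \<beta> = shift_of_lang (beta_lang \<beta>)"

definition phi_sym :: "nat \<Rightarrow> nat list" where
  "phi_sym j = replicate j 1 @ [0]"

definition phi_word :: "nat list \<Rightarrow> nat list" where
  "phi_word w = concat (map phi_sym w)"

definition phi_lang :: "nat list set \<Rightarrow> nat list set" where
  "phi_lang L = {v. \<exists>w \<in> L. \<exists>p s. phi_word w = p @ v @ s}"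

text \<open>phi on one-sided sequences: phi(x_0 x_1 ...) = phi(x_0) phi(x_1) ...\<close>
function phi_seq :: "(nat \<Rightarrow> nat) \<Rightarrow> nat \<Rightarrow> nat" where
  "phi_seq x p = (if p < x 0 then 1 else if p = x 0 then 0
                  else phi_seq (\<lambda>k. x (Suc k)) (p - Suc (x 0)))"
  by auto
termination by (relation "measure snd") auto

definition lex_le :: "(nat \<Rightarrow> nat) \<Rightarrow> (nat \<Rightarrow> nat) \<Rightarrow> bool" where
  "lex_le x y \<longleftrightarrow> x = y \<or> (\<exists>k. (\<forall>i<k. x i = y i) \<and> x k < y k)"

end

theory Submission
  imports Defs
begin

declare phi_seq.simps[simp del]

lemma phi_seq_lt: "p < x 0 \<Longrightarrow> phi_seq x p = 1"
  by (subst phi_seq.simps) simp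
lemma phi_seq_eq: "phi_seq x (x 0) = 0"
  by (subst phi_seq.simps) simp
lemma phi_seq_gt: "phi_seq x (Suc (x 0) + q) = phi_seq (\<lambda>k. x (Suc k)) q"
  by (subst phi_seq.simps) simp

lemma phi_word_simps: "phi_word [] = []" "phi_word (a # u) = replicate a 1 @ 0 # phi_word u"
  "phi_word (u @ v) = phi_word u @ phi_word v"
  by (simp_all add: phi_word_def phi_sym_def)

lemma phi_word_rep0: "phi_word (replicate k 0) = replicate k 0"
  by (induct k) (simp_all add: phi_word_simps)
lemma phi_word_set: "set (phi_word u) \<subseteq> {0,1}"
  by (induct u) (auto simp: phi_word_simps)
lemma phi_word_len: "length u \<le> length (phi_word u)"
  by (induct u) (auto simp: phi_word_simps)

lemma rep_eq: "replicate a (1::nat) @ 0 # X = replicate b 1 @ 0 # Y \<Longrightarrow> a = b \<and> X = Y"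
  by (induct a arbitrary: b; case_tac b; auto)

lemma phi_prefix: "phi_word u @ s = phi_word v \<Longrightarrow> \<exists>v'. v = u @ v'"
proof (induct u arbitrary: v)
  case Nil then show ?case by simp
next
  case (Cons a u)
  then obtain b v1 where v: "v = b # v1" by (cases v) (auto simp: phi_word_simps)
  from Cons.prems have "replicate a 1 @ 0 # (phi_word u @ s) = replicate b 1 @ 0 # phi_word v1"
    by (simp add: v phi_word_simps)
  from rep_eq[OF this] Cons.hyps show ?case by (auto simp: v)
qed

lemma phi_word_nth: "k < length (phi_word (map x [0..<m])) \<Longrightarrow> phi_word (map x [0..<m]) ! k = phi_seq x k"
proof (induct m arbitrary: x k)
  case 0 then show ?case by (simp add: phi_word_simps)
next
  case (Suc m)
  have e: "phi_word (map x [0..<Suc m]) = replicate (x 0) 1 @ 0 # phi_word (map (\<lambda>k. x (Suc k)) [0..<m])"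
    by (simp only: map_upt_Suc phi_word_simps)
  show ?case
  proof (cases "k < x 0")
    case True then show ?thesis unfolding e by (simp add: nth_append phi_seq_lt)
  next
    case False
    show ?thesis
    proof (cases "k = x 0")
      case True then show ?thesis unfolding e by (simp add: nth_append phi_seq_eq)
    next
      case False
      with \<open>\<not> k < x 0\<close> have "\<exists>q. k = Suc (x 0) + q" by presburger
      then obtain q where k: "k = Suc (x 0) + q" by blast
      have "q < length (phi_word (map (\<lambda>k. x (Suc k)) [0..<m]))" using Suc.prems unfolding e k by simp
      then show ?thesis using Suc.hyps[of q "\<lambda>k. x (Suc k)"] phi_seq_gt[of x q] unfolding e k by (simp add: nth_append phi_seq_gt)
    qed
  qed
qed

lemma map_upto: "map f [i..j] = map (\<lambda>k. f (i + int k)) [0..<nat (j - i + 1)]"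
  by (rule nth_equalityI) auto

lemma map_upto_m1: "map f [-1..int m - 1] = f (-1) # map (\<lambda>k. f (int k)) [0..<m]"
proof -
  have "nat (int m - 1 - (-1) + 1) = Suc m" by simp
  then show ?thesis unfolding map_upto by (simp add: map_upt_Suc del: upt_Suc)
qed

lemma phi_mono: "(\<forall>i<k. x i = y i) \<Longrightarrow> x k < y k \<Longrightarrow> lex_le (phi_seq x) (phi_seq y)"
proof (induct k arbitrary: x y)
  case 0
  have "\<forall>i<x 0. phi_seq x i = phi_seq y i" using 0 by (simp add: phi_seq_lt)
  moreover have "phi_seq x (x 0) < phi_seq y (x 0)" using 0 by (simp add: phi_seq_lt phi_seq_eq)
  ultimately show ?case unfolding lex_le_def by blast
next
  case (Suc k)
  have x0: "x 0 = y 0" using Suc.prems by auto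
  have ih: "lex_le (phi_seq (\<lambda>k. x (Suc k))) (phi_seq (\<lambda>k. y (Suc k)))"
    using Suc.prems by (intro Suc.hyps) auto
  have pre: "\<forall>i<Suc (x 0). phi_seq x i = phi_seq y i"
    proof (intro allI impI)
    fix i assume "i < Suc (x 0)"
    then have "i < x 0 \<or> i = x 0" by linarith
    then show "phi_seq x i = phi_seq y i"
    proof
      assume "i < x 0" then show ?thesis using x0 phi_seq_lt[of i x] phi_seq_lt[of i y] by simp
    next
      assume "i = x 0" then show ?thesis using x0 phi_seq_eq[of x] phi_seq_eq[of y] by simp
    qed
  qed
  from ih show ?case
  proof (unfold lex_le_def, elim disjE exE conjE)
    assume e: "phi_seq (\<lambda>k. x (Suc k)) = phi_seq (\<lambda>k. y (Suc k))"
    have "phi_seq x p = phi_seq y p" for p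
    proof (cases "p < Suc (x 0)")
      case True then show ?thesis using pre by blast
    next
      case False
      then have "\<exists>q. p = Suc (x 0) + q" by presburger
      then obtain q where "p = Suc (x 0) + q" by blast
      then show ?thesis using e x0 phi_seq_gt[of x q] phi_seq_gt[of y q] by simp
    qed
    then show "phi_seq x = phi_seq y \<or> (\<exists>k. (\<forall>i<k. phi_seq x i = phi_seq y i) \<and> phi_seq x k < phi_seq y k)"
      by blast
  next
    fix j assume a: "\<forall>i<j. phi_seq (\<lambda>k. x (Suc k)) i = phi_seq (\<lambda>k. y (Suc k)) i"
      and b: "phi_seq (\<lambda>k. x (Suc k)) j < phi_seq (\<lambda>k. y (Suc k)) j"
    have "\<forall>i<Suc (x 0) + j. phi_seq x i = phi_seq y i"
    proof (intro allI impI)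
      fix i assume "i < Suc (x 0) + j"
      show "phi_seq x i = phi_seq y i"
      proof (cases "i < Suc (x 0)")
        case True then show ?thesis using pre by blast
      next
        case False
        then have "\<exists>q. i = Suc (x 0) + q" by presburger
        then obtain q where q: "i = Suc (x 0) + q" by blast
        with \<open>i < Suc (x 0) + j\<close> have "q < j" by simp
        then show ?thesis using a x0 q phi_seq_gt[of x q] phi_seq_gt[of y q] by simp
      qed
    qed
    moreover have "phi_seq x (Suc (x 0) + j) < phi_seq y (Suc (x 0) + j)"
      using b x0 phi_seq_gt[of x j] phi_seq_gt[of y j] by simp
    ultimately show "phi_seq x = phi_seq y \<or> (\<exists>k. (\<forall>i<k. phi_seq x i = phi_seq y i) \<and> phi_seq x k < phi_seq y k)"
      by blast
  qed
qed

lemma phi_lex: "lex_le x y \<Longrightarrow> lex_le (phi_seq x) (phi_seq y)"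
  unfolding lex_le_def[of x y] using phi_mono by (auto simp: lex_le_def)



definition run :: "(nat \<Rightarrow> nat) \<Rightarrow> nat" where "run y = (LEAST k. y k = 0)"
definition nxt :: "(nat \<Rightarrow> nat) \<Rightarrow> nat \<Rightarrow> nat" where "nxt y = (\<lambda>k. y (k + Suc (run y)))"
definition parse :: "(nat \<Rightarrow> nat) \<Rightarrow> nat \<Rightarrow> nat" where "parse y k = run ((nxt ^^ k) y)"
definition G :: "(nat \<Rightarrow> nat) \<Rightarrow> bool" where "G y \<longleftrightarrow> (\<forall>k. y k \<le> 1) \<and> (\<forall>i. \<exists>k\<ge>i. y k = 0)"

lemma G_run: "G y \<Longrightarrow> y (run y) = 0 \<and> (\<forall>k<run y. y k = 1)"
proof -
  assume g: "G y"
  then obtain k where "y k = 0" unfolding G_def by blast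
  then have "y (run y) = 0" unfolding run_def by (rule LeastI)
  moreover have "\<forall>k<run y. y k = 1"
  proof (intro allI impI)
    fix k assume "k < run y"
    then have "y k \<noteq> 0" unfolding run_def by (rule not_less_Least)
    moreover have "y k \<le> 1" using g unfolding G_def by blast
    ultimately show "y k = 1" by simp
  qed
  ultimately show ?thesis by blast
qed

lemma G_nxt: "G y \<Longrightarrow> G (nxt y)"
proof -
  assume g: "G y"
  have "\<forall>k. nxt y k \<le> 1" using g unfolding G_def nxt_def by blast
  moreover have "\<exists>k\<ge>i. nxt y k = 0" for i
  proof -
    obtain k where k: "k \<ge> i + Suc (run y)" "y k = 0" using g unfolding G_def by blast
    then have "k - Suc (run y) \<ge> i" "nxt y (k - Suc (run y)) = 0" by (simp_all add: nxt_def)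
    then show ?thesis by blast
  qed
  ultimately show ?thesis unfolding G_def by blast
qed

lemma parse_Suc: "parse y (Suc k) = parse (nxt y) k"
  unfolding parse_def funpow_Suc_right by simp

lemma parse_shift: "(\<lambda>k. parse y (Suc k)) = parse (nxt y)"
  by (rule ext) (rule parse_Suc)

lemma phi_parse: "G y \<Longrightarrow> phi_seq (parse y) p = y p"
proof (induct p arbitrary: y rule: less_induct)
  case (less p y)
  have r: "y (run y) = 0" "\<forall>k<run y. y k = 1" using G_run[OF less.prems] by auto
  have p0: "parse y 0 = run y" by (simp add: parse_def)
  show ?case
  proof (cases "p < run y")
    case True
    then show ?thesis using r phi_seq_lt[of p "parse y"] p0 by simp
  next
    case False
    show ?thesis
    proof (cases "p = run y")
      case True
      then show ?thesis using r phi_seq_eq[of "parse y"] p0 by simp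
    next
      case False
      with \<open>\<not> p < run y\<close> have "\<exists>q. p = Suc (run y) + q" by presburger
      then obtain q where q: "p = Suc (run y) + q" by blast
      have "phi_seq (parse y) p = phi_seq (parse (nxt y)) q"
        using phi_seq_gt[of "parse y" q] p0 q parse_shift[of y] by simp
      also have "\<dots> = nxt y q" using less.hyps[of q "nxt y"] G_nxt[OF less.prems] q by simp
      also have "\<dots> = y p" using q by (simp add: nxt_def add.commute)
      finally show ?thesis .
    qed
  qed
qed

lemma beta_langE: "w \<in> beta_lang \<beta> \<Longrightarrow>
  (\<And>t i j. 0 \<le> t \<Longrightarrow> t \<le> 1 \<Longrightarrow> i < j \<Longrightarrow> w = map (beta_digit \<beta> t) [i..<j] \<Longrightarrow> P) \<Longrightarrow> P"
  unfolding beta_lang_def by blast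

lemma beta_langI: "0 \<le> t \<Longrightarrow> t \<le> 1 \<Longrightarrow> i < j \<Longrightarrow> map (beta_digit \<beta> t) [i..<j] \<in> beta_lang \<beta>"
  unfolding beta_lang_def by blast

definition L0 :: "real \<Rightarrow> nat list set" where
  "L0 \<beta> = {map (beta_digit \<beta> t) [0..<m] | t m. 0 \<le> t \<and> t < 1}"

lemma L0I: "0 \<le> t \<Longrightarrow> t < 1 \<Longrightarrow> map (beta_digit \<beta> t) [0..<m] \<in> L0 \<beta>"
  unfolding L0_def by blast

lemma L0E: "w \<in> L0 \<beta> \<Longrightarrow> (\<And>t m. 0 \<le> t \<Longrightarrow> t < 1 \<Longrightarrow> w = map (beta_digit \<beta> t) [0..<m] \<Longrightarrow> P) \<Longrightarrow> P"
  unfolding L0_def by blast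

context
  fixes \<beta> :: real
  assumes b1: "1 < \<beta>"
begin

lemma rem_add: "beta_rem \<beta> t (i + j) = beta_rem \<beta> (beta_rem \<beta> t i) j"
  by (induct j) simp_all

lemma digit_add: "beta_digit \<beta> t (i + j) = beta_digit \<beta> (beta_rem \<beta> t i) j"
  by (simp add: beta_digit_def rem_add)

lemma digit_Suc: "beta_digit \<beta> t (Suc j) = beta_digit \<beta> (beta_rem \<beta> t 1) j"
  using digit_add[of t 1 j] by simp

lemma rem1: "beta_rem \<beta> t 1 = frac (\<beta> * t)"
  by simp

lemma map_digit_shift: "map (beta_digit \<beta> t) [i..<i+m] = map (beta_digit \<beta> (beta_rem \<beta> t i)) [0..<m]"
  by (rule nth_equalityI) (auto simp: digit_add)

lemma W_Suc: "map (beta_digit \<beta> r) [0..<Suc m] = beta_digit \<beta> r 0 # map (beta_digit \<beta> (beta_rem \<beta> r 1)) [0..<m]"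
  by (simp only: map_upt_Suc digit_Suc)

lemma digit0_rem1: "0 \<le> r \<Longrightarrow> \<beta> * r = real (beta_digit \<beta> r 0) + beta_rem \<beta> r 1"
proof -
  assume "0 \<le> r"
  then have "0 \<le> \<beta> * r" using b1 by simp
  then have "0 \<le> \<lfloor>\<beta> * r\<rfloor>" by simp
  then show ?thesis by (simp add: beta_digit_def frac_def)
qed

lemma digit_bound: "0 \<le> r \<Longrightarrow> r \<le> 1 \<Longrightarrow> \<beta> < real n \<Longrightarrow> beta_digit \<beta> r 0 < n"
proof -
  assume a: "0 \<le> r" "r \<le> 1" "\<beta> < real n"
  have "\<beta> * r \<le> \<beta>" using a b1 by (simp add: mult_left_le)
  then have "real_of_int \<lfloor>\<beta> * r\<rfloor> < real n" using a of_int_floor_le[of "\<beta> * r"] by linarith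
  then have "\<lfloor>\<beta> * r\<rfloor> < int n" by linarith
  moreover have "0 \<le> \<lfloor>\<beta> * r\<rfloor>" using a b1 by simp
  ultimately show ?thesis by (simp add: beta_digit_def nat_less_iff)
qed

lemma W_cons: "0 \<le> s \<Longrightarrow> s < 1 \<Longrightarrow>
   map (beta_digit \<beta> ((real c + s) / \<beta>)) [0..<Suc m] = c # map (beta_digit \<beta> s) [0..<m]"
proof -
  assume s: "0 \<le> s" "s < 1"
  have e: "\<beta> * ((real c + s) / \<beta>) = real c + s" using b1 by simp
  have f: "\<lfloor>real c + s\<rfloor> = int c" using s by (intro floor_unique) auto
  have "beta_digit \<beta> ((real c + s) / \<beta>) 0 = nat \<lfloor>\<beta> * ((real c + s) / \<beta>)\<rfloor>"
    by (simp only: beta_digit_def beta_rem.simps)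
  also have "\<dots> = nat \<lfloor>real c + s\<rfloor>" by (simp only: e)
  also have "\<dots> = c" by (simp only: f nat_int)
  finally have d: "beta_digit \<beta> ((real c + s) / \<beta>) 0 = c" .
  have r: "beta_rem \<beta> ((real c + s) / \<beta>) 1 = s" by (simp only: rem1 e) (simp add: frac_def f)
  show ?thesis by (simp only: W_Suc d r)
qed

lemma rem_div: "0 \<le> s \<Longrightarrow> s < 1 \<Longrightarrow> idx \<le> k \<Longrightarrow> beta_rem \<beta> (s / \<beta> ^ k) idx = s / \<beta> ^ (k - idx)"
proof (induct idx)
  case 0 then show ?case by simp
next
  case (Suc idx)
  then have ih: "beta_rem \<beta> (s / \<beta> ^ k) idx = s / \<beta> ^ (k - idx)" by simp
  have kk: "k - idx = Suc (k - Suc idx)" using Suc.prems by simp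
  have e: "\<beta> * (s / \<beta> ^ (k - idx)) = s / \<beta> ^ (k - Suc idx)" using b1 by (simp add: kk)
  have "1 \<le> \<beta> ^ (k - Suc idx)" using b1 by simp
  then have "s / \<beta> ^ (k - Suc idx) < 1" using Suc.prems by (simp add: divide_less_eq)
  moreover have "0 \<le> s / \<beta> ^ (k - Suc idx)" using Suc.prems b1 by (intro divide_nonneg_nonneg) auto
  ultimately have "frac (s / \<beta> ^ (k - Suc idx)) = s / \<beta> ^ (k - Suc idx)" by (simp add: frac_eq)
  then show ?case by (simp only: beta_rem.simps ih e)
qed

lemma digit_div: "0 \<le> s \<Longrightarrow> s < 1 \<Longrightarrow>
  beta_digit \<beta> (s / \<beta> ^ k) idx = (if idx < k then 0 else beta_digit \<beta> s (idx - k))"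
proof (cases "idx < k")
  case True
  assume s: "0 \<le> s" "s < 1"
  have kk: "k - idx = Suc (k - Suc idx)" using True by simp
  have e: "\<beta> * (s / \<beta> ^ (k - idx)) = s / \<beta> ^ (k - Suc idx)" using b1 by (simp add: kk)
  have "1 \<le> \<beta> ^ (k - Suc idx)" using b1 by simp
  then have "s / \<beta> ^ (k - Suc idx) < 1" using s by (simp add: divide_less_eq)
  moreover have "0 \<le> s / \<beta> ^ (k - Suc idx)" using s b1 by (intro divide_nonneg_nonneg) auto
  ultimately have "\<lfloor>s / \<beta> ^ (k - Suc idx)\<rfloor> = 0" by (intro floor_unique) auto
  moreover have "beta_digit \<beta> (s / \<beta> ^ k) idx = nat \<lfloor>s / \<beta> ^ (k - Suc idx)\<rfloor>"
    using True by (simp only: beta_digit_def rem_div[OF s less_imp_le[OF True]] e)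
  ultimately show ?thesis using True by simp
next
  case False
  assume s: "0 \<le> s" "s < 1"
  have "idx = k + (idx - k)" using False by simp
  then have "beta_digit \<beta> (s / \<beta> ^ k) idx = beta_digit \<beta> (beta_rem \<beta> (s / \<beta> ^ k) k) (idx - k)"
    by (metis digit_add)
  also have "\<dots> = beta_digit \<beta> s (idx - k)" using rem_div[OF s, of k k] by simp
  finally show ?thesis using False by simp
qed

lemma Lchar: "w \<in> beta_lang \<beta> \<Longrightarrow> \<exists>r m. 0 \<le> r \<and> r \<le> 1 \<and> w = map (beta_digit \<beta> r) [0..<m]"
proof -
  assume "w \<in> beta_lang \<beta>"
  then obtain t i j where t: "0 \<le> t" "t \<le> 1" "i < j" "w = map (beta_digit \<beta> t) [i..<j]"
    unfolding beta_lang_def by blast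
  have "j = i + (j - i)" using t by simp
  then have "w = map (beta_digit \<beta> (beta_rem \<beta> t i)) [0..<j - i]"
    using t(4) map_digit_shift[of t i "j - i"] by simp
  moreover have "0 \<le> beta_rem \<beta> t i \<and> beta_rem \<beta> t i \<le> 1"
    using t by (cases i) (auto simp: less_imp_le[OF frac_lt_1])
  ultimately show ?thesis by blast
qed

lemma K: "0 \<le> r \<Longrightarrow> r \<le> 1 \<Longrightarrow> p @ c # phi_word u @ s = phi_word (map (beta_digit \<beta> r) [0..<m])
   \<Longrightarrow> u \<in> L0 \<beta>"
proof (induct m arbitrary: r p)
  case 0 then show ?case by (simp add: phi_word_simps)
next
  case (Suc m)
  define d where "d = beta_digit \<beta> r 0"
  define r' where "r' = beta_rem \<beta> r 1"
  have r'b: "0 \<le> r'" "r' < 1" by (simp_all add: r'_def frac_lt_1)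
  have E: "p @ c # phi_word u @ s = replicate d 1 @ 0 # phi_word (map (beta_digit \<beta> r') [0..<m])"
    using Suc.prems(3) unfolding W_Suc d_def r'_def by (simp add: phi_word_simps)
  show ?case
  proof (cases "Suc d \<le> length p")
    case True
    from arg_cong[OF E, of "drop (Suc d)"] True
    have "drop (Suc d) p @ c # phi_word u @ s = phi_word (map (beta_digit \<beta> r') [0..<m])" by simp
    then show ?thesis using Suc.hyps[of r' "drop (Suc d) p"] r'b by simp
  next
    case False
    from arg_cong[OF E, of "drop (length p)"] False
    have E2: "c # phi_word u @ s = replicate (d - length p) 1 @ 0 # phi_word (map (beta_digit \<beta> r') [0..<m])"
      by simp
    show ?thesis
    proof (cases "length p = d")
      case True
      with E2 have "phi_word u @ s = phi_word (map (beta_digit \<beta> r') [0..<m])" by simp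
      from phi_prefix[OF this] obtain v' where v: "map (beta_digit \<beta> r') [0..<m] = u @ v'" by blast
      then have "u = take (length u) (map (beta_digit \<beta> r') [0..<m])" by simp
      also have "\<dots> = map (beta_digit \<beta> r') [0..<length u]"
        using arg_cong[OF v, of length] by (simp add: take_map)
      finally show ?thesis using r'b unfolding L0_def by blast
    next
      case False
      with \<open>\<not> Suc d \<le> length p\<close> have lt: "length p < d" by simp
      define a where "a = d - length p - 1"
      have da: "d - length p = Suc a" using lt by (simp add: a_def)
      from E2 have "phi_word u @ s = phi_word (a # map (beta_digit \<beta> r') [0..<m])"
        by (simp add: da phi_word_simps)
      from phi_prefix[OF this] obtain v' where v: "a # map (beta_digit \<beta> r') [0..<m] = u @ v'" by blast
      define t where "t = (real a + r') / \<beta>"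
      have W: "map (beta_digit \<beta> t) [0..<Suc m] = a # map (beta_digit \<beta> r') [0..<m]"
        unfolding t_def using W_cons[OF r'b] .
      have "u = take (length u) (map (beta_digit \<beta> t) [0..<Suc m])" using v W by simp
      also have "\<dots> = map (beta_digit \<beta> t) [0..<length u]"
        using arg_cong[OF v, of length] by (simp add: take_map)
      finally have u: "u = map (beta_digit \<beta> t) [0..<length u]" .
      have "\<beta> * r = real d + r'" using digit0_rem1[OF Suc.prems(1)] by (simp add: d_def r'_def)
      moreover have "\<beta> * r \<le> \<beta>" using Suc.prems b1 by (simp add: mult_left_le)
      moreover have "real a < real d" using lt by (simp add: a_def)
      ultimately have "real a + r' < \<beta>" by linarith
      then have "t < 1" using b1 by (simp add: t_def divide_less_eq)
      moreover have "0 \<le> t" using r'b b1 by (simp add: t_def)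
      ultimately show ?thesis using u unfolding L0_def by blast
    qed
  qed
qed

lemma runs: "\<beta> < real n \<Longrightarrow> 0 \<le> r \<Longrightarrow> r \<le> 1 \<Longrightarrow>
   p @ replicate n 1 @ s = phi_word (map (beta_digit \<beta> r) [0..<m]) \<Longrightarrow> False"
proof (induct m arbitrary: r p)
  case 0
  have "n \<noteq> 0" using 0 b1 by auto
  then show ?case using 0 by (simp add: phi_word_simps)
next
  case (Suc m)
  define d where "d = beta_digit \<beta> r 0"
  define r' where "r' = beta_rem \<beta> r 1"
  have r'b: "0 \<le> r'" "r' \<le> 1" by (simp_all add: r'_def less_imp_le[OF frac_lt_1])
  have dn: "d < n" using digit_bound[OF Suc.prems(2,3,1)] by (simp add: d_def)
  have E: "p @ replicate n 1 @ s = replicate d 1 @ 0 # phi_word (map (beta_digit \<beta> r') [0..<m])"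
    using Suc.prems(4) unfolding W_Suc d_def r'_def by (simp add: phi_word_simps)
  show ?case
  proof (cases "Suc d \<le> length p")
    case True
    from arg_cong[OF E, of "drop (Suc d)"] True
    have "drop (Suc d) p @ replicate n 1 @ s = phi_word (map (beta_digit \<beta> r') [0..<m])" by simp
    then show ?thesis using Suc.hyps[of r' "drop (Suc d) p"] r'b Suc.prems(1) by simp
  next
    case False
    from arg_cong[OF E, of "drop (length p)"] False
    have E2: "replicate n 1 @ s = replicate (d - length p) 1 @ 0 # phi_word (map (beta_digit \<beta> r') [0..<m])"
      by simp
    have "d - length p < n" using dn by simp
    then have "(replicate n 1 @ s) ! (d - length p) = 1" by (simp add: nth_append)
    moreover have "(replicate (d - length p) 1 @ 0 # phi_word (map (beta_digit \<beta> r') [0..<m])) ! (d - length p) = 0"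
      by (simp add: nth_append)
    ultimately show ?thesis using E2 by simp
  qed
qed


lemma rr_to_L0: "x \<in> right_rays (beta_shift \<beta>) \<Longrightarrow> map x [0..<m] \<in> L0 \<beta>"
proof -
  assume "x \<in> right_rays (beta_shift \<beta>)"
  then obtain z where z: "z \<in> beta_shift \<beta>" "x = (\<lambda>k. z (int k))" unfolding right_rays_def by blast
  have "\<forall>i j. i \<le> j \<longrightarrow> map z [i..j] \<in> beta_lang \<beta>"
    using z(1) unfolding beta_shift_def shift_of_lang_def by blast
  then have "map z [-1..int m - 1] \<in> beta_lang \<beta>" by simp
  moreover have "map z [-1..int m - 1] = z (-1) # map x [0..<m]" unfolding map_upto_m1 z(2) ..
  ultimately have "z (-1) # map x [0..<m] \<in> beta_lang \<beta>" by simp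
  then obtain t i j where t: "0 \<le> t" "t \<le> 1" "i < j"
      "z (-1) # map x [0..<m] = map (beta_digit \<beta> t) [i..<j]" by (rule beta_langE)
  have len: "j = Suc i + m" using arg_cong[OF t(4), of length] t(3) by simp
  have "[i..<j] = i # [Suc i..<j]" using t(3) by (simp add: upt_conv_Cons)
  then have "map x [0..<m] = map (beta_digit \<beta> t) [Suc i..<Suc i + m]" using t(4) len by simp
  also have "\<dots> = map (beta_digit \<beta> (beta_rem \<beta> t (Suc i))) [0..<m]" by (rule map_digit_shift)
  finally have e: "map x [0..<m] = map (beta_digit \<beta> (beta_rem \<beta> t (Suc i))) [0..<m]" .
  have "0 \<le> beta_rem \<beta> t (Suc i)" "beta_rem \<beta> t (Suc i) < 1" by (simp_all add: frac_lt_1)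
  then show ?thesis unfolding e by (rule L0I)
qed

lemma L0_to_rr:
  assumes P: "\<forall>m. map x [0..<m] \<in> L0 \<beta>"
  shows "x \<in> right_rays (beta_shift \<beta>)"
proof -
  define z where "z q = (if q < 0 then 0 else x (nat q))" for q :: int
  have zx: "x = (\<lambda>k. z (int k))" by (auto simp: z_def)
  have "z \<in> beta_shift \<beta>" unfolding beta_shift_def shift_of_lang_def
  proof (intro CollectI allI impI)
    fix i j :: int assume ij: "i \<le> j"
    define k0 where "k0 = nat (-i)"
    define m where "m = nat (j + 1)"
    from P have "map x [0..<m] \<in> L0 \<beta>" ..
    then obtain s m' where s: "0 \<le> s" "s < 1" "map x [0..<m] = map (beta_digit \<beta> s) [0..<m']"
      by (rule L0E)
    have mm: "m' = m" using arg_cong[OF s(3), of length] by simp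
    have xs: "l < m \<Longrightarrow> x l = beta_digit \<beta> s l" for l
      using arg_cong[OF s(3), of "\<lambda>w. w ! l"] mm by simp
    define t where "t = s / \<beta> ^ k0"
    define a where "a = nat (i + int k0)"
    define len where "len = nat (j - i + 1)"
    have "map z [i..j] = map (beta_digit \<beta> t) [a..<a+len]"
      unfolding map_upto len_def[symmetric]
    proof (rule nth_equalityI)
      show "length (map (\<lambda>k. z (i + int k)) [0..<len]) = length (map (beta_digit \<beta> t) [a..<a + len])"
        by simp
      fix l assume "l < length (map (\<lambda>k. z (i + int k)) [0..<len])"
      then have l: "l < len" by simp
      have "z (i + int l) = beta_digit \<beta> t (a + l)"
      proof (cases "i + int l < 0")
        case True
        then have "a + l < k0" unfolding a_def k0_def by linarith
        then show ?thesis using True by (simp add: z_def t_def digit_div[OF s(1,2)])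
      next
        case False
        then have e1: "\<not> a + l < k0" "a + l - k0 = nat (i + int l)" "nat (i + int l) < m"
          using l ij unfolding a_def k0_def m_def len_def by linarith+
        then show ?thesis using False xs by (simp add: z_def t_def digit_div[OF s(1,2)])
      qed
      then show "map (\<lambda>k. z (i + int k)) [0..<len] ! l = map (beta_digit \<beta> t) [a..<a + len] ! l"
        using l by simp
    qed
    moreover have "0 \<le> t" using s b1 by (simp add: t_def)
    moreover have "t \<le> 1"
    proof -
      have "1 \<le> \<beta> ^ k0" using b1 by simp
      then have "s / \<beta> ^ k0 \<le> s / 1" using s by (intro divide_left_mono) auto
      then have "t \<le> s" by (simp add: t_def)
      then show ?thesis using s by simp
    qed
    moreover have "a < a + len" using ij by (simp add: len_def)
    ultimately show "map z [i..j] \<in> beta_lang \<beta>" using beta_langI by simp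
  qed
  then show ?thesis unfolding right_rays_def using zx by blast
qed


lemma phi_rr: "x \<in> right_rays (beta_shift \<beta>) \<Longrightarrow> phi_seq x \<in> right_rays (shift_of_lang (phi_lang (beta_lang \<beta>)))"
proof -
  assume xr: "x \<in> right_rays (beta_shift \<beta>)"
  define y where "y q = (if q < 0 then 0 else phi_seq x (nat q))" for q :: int
  have yx: "phi_seq x = (\<lambda>k. y (int k))" by (auto simp: y_def)
  have "y \<in> shift_of_lang (phi_lang (beta_lang \<beta>))" unfolding shift_of_lang_def
  proof (intro CollectI allI impI)
    fix i j :: int assume ij: "i \<le> j"
    define k0 where "k0 = nat (-i)"
    define m where "m = nat (j + 1)"
    have "map x [0..<m] \<in> L0 \<beta>" using xr by (rule rr_to_L0)
    then obtain s m' where s: "0 \<le> s" "s < 1" "map x [0..<m] = map (beta_digit \<beta> s) [0..<m']"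
      by (rule L0E)
    have mm: "m' = m" using arg_cong[OF s(3), of length] by simp
    define t where "t = s / \<beta> ^ k0"
    define a where "a = nat (i + int k0)"
    define len where "len = nat (j - i + 1)"
    define U where "U = map x [0..<m]"
    define w where "w = map (beta_digit \<beta> t) [0..<k0 + m]"
    have wU: "w = replicate k0 0 @ U"
      unfolding w_def U_def s(3) mm
      by (rule nth_equalityI) (auto simp: nth_append t_def digit_div[OF s(1,2)])
    define ws where "ws = phi_word w"
    have ws: "ws = replicate k0 0 @ phi_word U" by (simp add: ws_def wU phi_word_simps phi_word_rep0)
    have lenU: "m \<le> length (phi_word U)" using phi_word_len[of U] by (simp add: U_def)
    have al: "a + len \<le> k0 + m" using ij unfolding a_def len_def k0_def m_def by linarith
    have M: "map y [i..j] = take len (drop a ws)"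
      unfolding map_upto len_def[symmetric]
    proof (rule nth_equalityI)
      show "length (map (\<lambda>k. y (i + int k)) [0..<len]) = length (take len (drop a ws))"
        using al lenU by (simp add: ws)
      fix l assume "l < length (map (\<lambda>k. y (i + int k)) [0..<len])"
      then have l: "l < len" by simp
      have "y (i + int l) = ws ! (a + l)"
      proof (cases "i + int l < 0")
        case True
        then have "a + l < k0" unfolding a_def k0_def by linarith
        then show ?thesis using True by (simp add: y_def ws nth_append)
      next
        case False
        then have e1: "\<not> a + l < k0" "a + l - k0 = nat (i + int l)" "nat (i + int l) < m"
          using l ij unfolding a_def k0_def m_def len_def by linarith+
        then have "nat (i + int l) < length (phi_word U)" using lenU by simp
        then have "phi_word U ! nat (i + int l) = phi_seq x (nat (i + int l))"
          unfolding U_def by (rule phi_word_nth)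
        then show ?thesis using False e1 by (simp add: y_def ws nth_append)
      qed
      moreover have "a + l \<le> length ws" using al lenU l by (simp add: ws)
      ultimately show "map (\<lambda>k. y (i + int k)) [0..<len] ! l = take len (drop a ws) ! l"
        using l by simp
    qed
    have "ws = take a ws @ map y [i..j] @ drop len (drop a ws)"
      unfolding M append_take_drop_id by (rule refl)
    moreover have "w \<in> beta_lang \<beta>"
    proof -
      have "0 < k0 + m" using ij unfolding k0_def m_def by linarith
      moreover have "0 \<le> t" using s b1 by (simp add: t_def)
      moreover have "t \<le> 1"
      proof -
        have "1 \<le> \<beta> ^ k0" using b1 by simp
        then have "s / \<beta> ^ k0 \<le> s / 1" using s by (intro divide_left_mono) auto
        then show ?thesis using s by (simp add: t_def)
      qed
      ultimately show ?thesis unfolding w_def by (intro beta_langI) auto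
    qed
    ultimately show "map y [i..j] \<in> phi_lang (beta_lang \<beta>)" unfolding phi_lang_def ws_def by blast
  qed
  then show ?thesis unfolding right_rays_def using yx by blast
qed

lemma rr_phi:
  assumes bn: "\<beta> < real n" and yr: "y \<in> right_rays (shift_of_lang (phi_lang (beta_lang \<beta>)))"
  shows "y \<in> phi_seq ` right_rays (beta_shift \<beta>)"
proof -
  obtain y' where y': "y' \<in> shift_of_lang (phi_lang (beta_lang \<beta>))" "y = (\<lambda>k. y' (int k))"
    using yr unfolding right_rays_def by blast
  have win: "\<exists>r m p s. 0 \<le> r \<and> r \<le> 1 \<and> p @ map y' [i..j] @ s = phi_word (map (beta_digit \<beta> r) [0..<m])"
    if ij: "i \<le> j" for i j
  proof -
    have "map y' [i..j] \<in> phi_lang (beta_lang \<beta>)" using y'(1) ij unfolding shift_of_lang_def by blast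
    then obtain w p s where w: "w \<in> beta_lang \<beta>" "phi_word w = p @ map y' [i..j] @ s"
      unfolding phi_lang_def by blast
    from Lchar[OF w(1)] obtain r m where rm: "0 \<le> r" "r \<le> 1" "w = map (beta_digit \<beta> r) [0..<m]" by blast
    have "p @ map y' [i..j] @ s = phi_word (map (beta_digit \<beta> r) [0..<m])" using w(2) rm(3) by simp
    with rm(1,2) show ?thesis by blast
  qed
  have vals: "y' q \<le> 1" for q
  proof -
    obtain r m p s where "p @ map y' [q..q] @ s = phi_word (map (beta_digit \<beta> r) [0..<m])"
      using win[of q q] by blast
    then have "phi_word (map (beta_digit \<beta> r) [0..<m]) = p @ [y' q] @ s" by simp
    then have "y' q \<in> set (phi_word (map (beta_digit \<beta> r) [0..<m]))" by simp
    then show ?thesis using phi_word_set by fastforce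
  qed
  have n1: "1 \<le> n" using bn b1 by (cases n) auto
  have zeros: "\<exists>k\<ge>i. y k = 0" for i
  proof (rule ccontr)
    assume nz: "\<not> (\<exists>k\<ge>i. y k = 0)"
    have one: "y k = 1" if "k \<ge> i" for k
    proof -
      have "y k \<le> 1" using vals[of "int k"] y'(2) by simp
      moreover have "y k \<noteq> 0"
      proof
        assume "y k = 0"
        with that have "\<exists>k\<ge>i. y k = 0" by (intro exI[of _ k]) simp
        with nz show False by simp
      qed
      ultimately show ?thesis by simp
    qed
    have "map y' [int i..int i + int n - 1] = replicate n 1"
    proof -
      have "nat (int i + int n - 1 - int i + 1) = n" using n1 by simp
      then have "map y' [int i..int i + int n - 1] = map (\<lambda>k. y' (int i + int k)) [0..<n]"
        unfolding map_upto by simp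
      also have "\<dots> = replicate n 1"
      proof (rule nth_equalityI)
        fix l assume "l < length (map (\<lambda>k. y' (int i + int k)) [0..<n])"
        then have "l < n" by simp
        have "y' (int i + int l) = y (i + l)" using y'(2) by simp
        then show "map (\<lambda>k. y' (int i + int k)) [0..<n] ! l = replicate n 1 ! l"
          using one[of "i + l"] \<open>l < n\<close> by simp
      qed simp
      finally show ?thesis .
    qed
    moreover obtain r m p s where "0 \<le> r" "r \<le> 1"
      "p @ map y' [int i..int i + int n - 1] @ s = phi_word (map (beta_digit \<beta> r) [0..<m])"
      using win[of "int i" "int i + int n - 1"] n1 by auto
    ultimately show False using runs[OF bn] by auto
  qed
  have G: "G y" unfolding G_def using vals zeros y'(2) by auto
  define x where "x = parse y"
  have px: "phi_seq x = y" using phi_parse[OF G] by (auto simp: x_def)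
  have "x \<in> right_rays (beta_shift \<beta>)"
  proof (rule L0_to_rr, intro allI)
    fix m
    define U where "U = map x [0..<m]"
    define len where "len = length (phi_word U)"
    have PU: "phi_word U = map y [0..<len]"
    proof (rule nth_equalityI)
      fix k assume "k < length (phi_word U)"
      then have "phi_word U ! k = phi_seq x k" unfolding U_def by (rule phi_word_nth)
      then show "phi_word U ! k = map y [0..<len] ! k" using \<open>k < length (phi_word U)\<close> px
        by (simp add: len_def)
    qed (simp add: len_def)
    have "map y' [-1..int len - 1] = y' (-1) # map y [0..<len]"
      unfolding map_upto_m1 y'(2) ..
    then have e: "map y' [-1..int len - 1] = y' (-1) # phi_word U" using PU by simp
    obtain r m' p s where "0 \<le> r" "r \<le> 1" "p @ map y' [-1..int len - 1] @ s = phi_word (map (beta_digit \<beta> r) [0..<m'])"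
      using win[of "-1" "int len - 1"] by auto
    then have "0 \<le> r" "r \<le> 1" "p @ y' (-1) # phi_word U @ s = phi_word (map (beta_digit \<beta> r) [0..<m'])"
      using e by simp_all
    then show "map x [0..<m] \<in> L0 \<beta>" unfolding U_def[symmetric] by (rule K)
  qed
  then show ?thesis using px by blast
qed

end

theorem lemma4p4:
  fixes n :: nat and \<beta> :: real
  assumes "1 < \<beta>" and "real n - 1 < \<beta>" and "\<beta> < real n"
  shows "phi_seq ` right_rays (beta_shift \<beta>)
           = right_rays (shift_of_lang (phi_lang (beta_lang \<beta>)))
       \<and> (\<forall>x \<in> right_rays (beta_shift \<beta>). \<forall>y \<in> right_rays (beta_shift \<beta>).
            lex_le x y \<longrightarrow> lex_le (phi_seq x) (phi_seq y))"
proof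
  show "phi_seq ` right_rays (beta_shift \<beta>) = right_rays (shift_of_lang (phi_lang (beta_lang \<beta>)))"
  proof
    show "phi_seq ` right_rays (beta_shift \<beta>) \<subseteq> right_rays (shift_of_lang (phi_lang (beta_lang \<beta>)))"
      using phi_rr[OF assms(1)] by blast
    show "right_rays (shift_of_lang (phi_lang (beta_lang \<beta>))) \<subseteq> phi_seq ` right_rays (beta_shift \<beta>)"
      using rr_phi[OF assms(1) assms(3)] by blast
  qed
  show "\<forall>x \<in> right_rays (beta_shift \<beta>). \<forall>y \<in> right_rays (beta_shift \<beta>).
            lex_le x y \<longrightarrow> lex_le (phi_seq x) (phi_seq y)"
    using phi_lex by blast
qed

end
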